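(* For every integer $n\geq 3$ there exists a strongly $2$-connected $(n-1)$-regular digraph on $2n$ vertices with no Hamilton cycle. For every integer $n\geq 3$ there exists a strongly $2$-connected $(n-1)$-regular oriented graph on $4n+2$ vertices with no Hamilton cycle.
   Context: A digraph has no loops and at most one edge in each direction between two vertices; an oriented graph has at most one edge between any two vertices. A digraph is $d$-regular if every vertex has in- and outdegree exactly $d$. Strongly 2-connected means the digraph has at least three vertices and remains strongly connected after deleting any single vertex. A Hamilton cycle is a directed cycle through all vertices. *)

theory Defs
  imports Main
begin

text \<open>A digraph is given by a vertex set V and an edge set E of ordered pairs.
  Using a set of pairs means at most one edge in each direction between two vertices.\<close>

definition digraph :: "'a set \<Rightarrow> ('a \<times> 'a) set \<Rightarrow> bool" where
  "digraph V E \<longleftrightarrow> finite V \<and> E \<subseteq> V \<times> V \<and> (\<forall>v. (v, v) \<notin> E)"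

definition oriented_graph :: "'a set \<Rightarrow> ('a \<times> 'a) set \<Rightarrow> bool" where
  "oriented_graph V E \<longleftrightarrow> digraph V E \<and> (\<forall>u v. (u, v) \<in> E \<longrightarrow> (v, u) \<notin> E)"

definition out_degree :: "('a \<times> 'a) set \<Rightarrow> 'a \<Rightarrow> nat" where
  "out_degree E v = card {u. (v, u) \<in> E}"

definition in_degree :: "('a \<times> 'a) set \<Rightarrow> 'a \<Rightarrow> nat" where
  "in_degree E v = card {u. (u, v) \<in> E}"

definition regular :: "nat \<Rightarrow> 'a set \<Rightarrow> ('a \<times> 'a) set \<Rightarrow> bool" where
  "regular d V E \<longleftrightarrow> (\<forall>v\<in>V. in_degree E v = d \<and> out_degree E v = d)"

definition strongly_connected :: "'a set \<Rightarrow> ('a \<times> 'a) set \<Rightarrow> bool" where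
  "strongly_connected V E \<longleftrightarrow> (\<forall>u\<in>V. \<forall>v\<in>V. (u, v) \<in> (E \<inter> (V \<times> V))\<^sup>*)"

definition strongly_2_connected :: "'a set \<Rightarrow> ('a \<times> 'a) set \<Rightarrow> bool" where
  "strongly_2_connected V E \<longleftrightarrow> card V \<ge> 3 \<and> strongly_connected V E \<and>
     (\<forall>x\<in>V. strongly_connected (V - {x}) (E \<inter> ((V - {x}) \<times> (V - {x}))))"

definition hamiltonian :: "'a set \<Rightarrow> ('a \<times> 'a) set \<Rightarrow> bool" where
  "hamiltonian V E \<longleftrightarrow> (\<exists>vs. vs \<noteq> [] \<and> distinct vs \<and> set vs = V \<and>
     (\<forall>i < length vs. (vs ! i, vs ! ((i + 1) mod length vs)) \<in> E))"

end

theory Submission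
  imports Defs
begin


lemma ham_sigma:
  assumes "hamiltonian V E"
  shows "\<exists>\<sigma>. (\<forall>v\<in>V. \<sigma> v \<in> V) \<and> inj_on \<sigma> V \<and> (\<forall>v\<in>V. (v, \<sigma> v) \<in> E) \<and>
     (\<forall>S. S \<subseteq> V \<longrightarrow> S \<noteq> {} \<longrightarrow> (\<forall>s\<in>S. \<sigma> s \<in> S) \<longrightarrow> S = V)"
proof -
  obtain vs where ne: "vs \<noteq> []" and dist: "distinct vs" and sv: "set vs = V"
    and ed: "\<forall>i < length vs. (vs ! i, vs ! ((i + 1) mod length vs)) \<in> E"
    using assms unfolding hamiltonian_def by blast
  define L where "L = length vs"
  have L0: "L > 0" using ne L_def by simp
  define idx where "idx v = (THE i. i < L \<and> vs ! i = v)" for v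
  have idx_nth: "idx (vs ! i) = i" if "i < L" for i
    unfolding idx_def
    apply (rule the_equality)
    using that dist L_def nth_eq_iff_index_eq by auto
  define \<sigma> where "\<sigma> v = vs ! ((idx v + 1) mod L)" for v
  have sig_nth: "\<sigma> (vs ! i) = vs ! ((i + 1) mod L)" if "i < L" for i
    using idx_nth[OF that] \<sigma>_def by simp
  have Vnth: "\<exists>i<L. v = vs ! i" if "v \<in> V" for v
    using that sv L_def by (metis in_set_conv_nth)
  have m1: "\<forall>v\<in>V. \<sigma> v \<in> V"
  proof
    fix v assume "v \<in> V"
    then obtain i where "i < L" "v = vs ! i" using Vnth by blast
    moreover have "(i + 1) mod L < L" using L0 by simp
    ultimately show "\<sigma> v \<in> V" using sig_nth sv L_def by (metis nth_mem)
  qed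
  have m2: "inj_on \<sigma> V"
  proof (rule inj_onI)
    fix v w assume "v \<in> V" "w \<in> V" "\<sigma> v = \<sigma> w"
    then obtain i j where ij: "i < L" "v = vs ! i" "j < L" "w = vs ! j" using Vnth by blast
    then have "vs ! ((i + 1) mod L) = vs ! ((j + 1) mod L)" using sig_nth \<open>\<sigma> v = \<sigma> w\<close> by simp
    moreover have "(i + 1) mod L < length vs" "(j + 1) mod L < length vs" using L0 L_def by auto
    ultimately have "(i + 1) mod L = (j + 1) mod L" using dist nth_eq_iff_index_eq by blast
    then have "i = j" using ij
      by (cases "Suc i = L"; cases "Suc j = L"; simp)
    then show "v = w" using ij by simp
  qed
  have m3: "\<forall>v\<in>V. (v, \<sigma> v) \<in> E"
  proof
    fix v assume "v \<in> V"
    then obtain i where "i < L" "v = vs ! i" using Vnth by blast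
    then show "(v, \<sigma> v) \<in> E" using sig_nth ed L_def by simp
  qed
  have m4: "S = V" if S: "S \<subseteq> V" "S \<noteq> {}" "\<forall>s\<in>S. \<sigma> s \<in> S" for S
  proof -
    obtain s where "s \<in> S" using S by blast
    then obtain i where i: "i < L" "s = vs ! i" using Vnth S by blast
    have all: "vs ! ((i + k) mod L) \<in> S" for k
    proof (induction k)
      case 0 then show ?case using i \<open>s \<in> S\<close> by simp
    next
      case (Suc k)
      have "\<sigma> (vs ! ((i + k) mod L)) = vs ! (((i + k) mod L + 1) mod L)"
        using sig_nth L0 by simp
      also have "((i + k) mod L + 1) mod L = (i + Suc k) mod L"
        by (simp add: mod_Suc_eq)
      finally show ?case using Suc S(3) by metis
    qed
    have "V \<subseteq> S"
    proof
      fix v assume "v \<in> V"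
      then obtain j where j: "j < L" "v = vs ! j" using Vnth by blast
      have "(i + (j + L - i)) mod L = j" using i j by simp
      then show "v \<in> S" using all[of "j + L - i"] j by simp
    qed
    then show ?thesis using S by blast
  qed
  show ?thesis using m1 m2 m3 m4 by blast
qed



locale hcore =
  fixes V :: "'a set" and E :: "('a \<times> 'a) set" and \<sigma> :: "'a \<Rightarrow> 'a" and A :: "'a set"
  assumes sV: "\<forall>v\<in>V. \<sigma> v \<in> V" and sinj: "inj_on \<sigma> V" and sE: "\<forall>v\<in>V. (v, \<sigma> v) \<in> E"
    and scl: "\<forall>S. S \<subseteq> V \<longrightarrow> S \<noteq> {} \<longrightarrow> (\<forall>s\<in>S. \<sigma> s \<in> S) \<longrightarrow> S = V"
    and AV: "A \<subseteq> V"
begin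

lemma half:
  assumes xV: "x \<in> V" and yV: "y \<in> V" and xA: "x \<notin> A" and yA: "y \<notin> A" and xy: "x \<noteq> y"
    and a1: "a1 \<in> A" and a2: "a2 \<in> A" and a12: "a1 \<noteq> a2" and r: "r \<in> A" "r \<noteq> a1" "r \<noteq> a2"
    and H1: "\<forall>u v. (u, v) \<in> E \<longrightarrow> u \<in> A \<longrightarrow> v \<in> A \<or> (u = a1 \<and> v = y) \<or> (u = a2 \<and> v = x)"
    and H2: "\<forall>u v. (u, v) \<in> E \<longrightarrow> v \<in> A \<longrightarrow> u \<in> A \<or> (u = x \<and> v = a1) \<or> (u = y \<and> v = a2)"
    and s2: "\<sigma> a2 = x"
  shows False
proof -
  have a1V: "a1 \<in> V" and a2V: "a2 \<in> V" using a1 a2 AV by auto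
  have h1: "\<sigma> u \<in> A \<or> (u = a1 \<and> \<sigma> u = y) \<or> (u = a2 \<and> \<sigma> u = x)" if "u \<in> A" for u
  proof -
    have e: "(u, \<sigma> u) \<in> E" using sE AV that by blast
    show ?thesis using H1[rule_format, OF e that] .
  qed
  have h2: "u \<in> A \<or> (u = x \<and> \<sigma> u = a1) \<or> (u = y \<and> \<sigma> u = a2)" if "u \<in> V" "\<sigma> u \<in> A" for u
  proof -
    have e: "(u, \<sigma> u) \<in> E" using sE that by blast
    show ?thesis using H2[rule_format, OF e that(2)] .
  qed
  have inj: "u = w" if "u \<in> V" "w \<in> V" "\<sigma> u = \<sigma> w" for u w
    using inj_onD[OF sinj that(3) that(1) that(2)] .
  show False
  proof (cases "\<sigma> x = a1")
    case True
    show False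
    proof (cases "\<sigma> a1 = y")
      case False
      let ?S = "insert x A"
      have "\<forall>s\<in>?S. \<sigma> s \<in> ?S"
      proof
        fix s assume s: "s \<in> ?S"
        show "\<sigma> s \<in> ?S"
        proof (cases "s = x")
          case True then show ?thesis using \<open>\<sigma> x = a1\<close> a1 by simp
        next
          case nx: False
          then have "s \<in> A" using s by simp
          then have "\<sigma> s \<in> A \<or> (s = a1 \<and> \<sigma> s = y) \<or> (s = a2 \<and> \<sigma> s = x)" using h1 by blast
          then show ?thesis using False by blast
        qed
      qed
      then have "?S = V" using scl[rule_format, of ?S] AV xV by blast
      then show False using yV yA xy by blast
    next
      case s1: True
      let ?R = "A - {a1, a2}"
      have "\<exists>r0\<in>?R. \<sigma> r0 = a2"
      proof (rule ccontr)
        assume nr: "\<not> ?thesis"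
        have "\<forall>s\<in>?R. \<sigma> s \<in> ?R"
        proof
          fix s assume s: "s \<in> ?R"
          then have sV': "s \<in> V" using AV by auto
          have "\<sigma> s \<in> A" using h1[of s] s by auto
          moreover have "\<sigma> s \<noteq> a1" using inj[of s x] True s sV' xV xA by auto
          moreover have "\<sigma> s \<noteq> a2" using nr s by auto
          ultimately show "\<sigma> s \<in> ?R" by auto
        qed
        moreover have "?R \<subseteq> V" "?R \<noteq> {}" using AV r by auto
        ultimately have "?R = V" using scl[rule_format, of ?R] by blast
        then show False using xV xA by blast
      qed
      then obtain r0 where r0: "r0 \<in> ?R" "\<sigma> r0 = a2" by blast
      let ?T = "V - insert a2 ?R"
      have "\<forall>t\<in>?T. \<sigma> t \<in> ?T"
      proof
        fix t assume t: "t \<in> ?T"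
        show "\<sigma> t \<in> ?T"
        proof (cases "t \<in> A")
          case True
          then have "t = a1" using t by auto
          then show ?thesis using s1 yV yA a2 by auto
        next
          case False
          have tV: "t \<in> V" using t by auto
          have "\<sigma> t \<notin> insert a2 ?R"
          proof
            assume "\<sigma> t \<in> insert a2 ?R"
            then have "\<sigma> t \<in> A" using a2 by auto
            then have "(t = x \<and> \<sigma> t = a1) \<or> (t = y \<and> \<sigma> t = a2)" using h2 tV False by blast
            moreover have "\<not> (t = y \<and> \<sigma> t = a2)"
              using inj[of y r0] r0 yV AV yA by auto
            ultimately have "\<sigma> t = a1" by blast
            then show False using \<open>\<sigma> t \<in> insert a2 ?R\<close> a12 by auto
          qed
          then show ?thesis using sV tV by auto
        qed
      qed
      moreover have "?T \<subseteq> V" "?T \<noteq> {}" using xV xA a2 by auto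
      ultimately have "?T = V" using scl[rule_format, of ?T] by blast
      then show False using a2V by blast
    qed
  next
    case False
    let ?S = "V - (A - {a2})"
    have "\<forall>t\<in>?S. \<sigma> t \<in> ?S"
    proof
      fix t assume t: "t \<in> ?S"
      then have tV: "t \<in> V" by auto
      show "\<sigma> t \<in> ?S"
      proof (cases "t = a2")
        case True then show ?thesis using s2 xV xA by auto
      next
        case ta: False
        then have "t \<notin> A" using t by auto
        then have "\<sigma> t \<notin> A \<or> \<sigma> t = a2" using h2[of t] tV False by auto
        then show ?thesis using sV tV by auto
      qed
    qed
    moreover have "?S \<subseteq> V" "?S \<noteq> {}" using xV xA by auto
    ultimately have "?S = V" using scl[rule_format, of ?S] by blast
    then show False using a1 a1V a12 by blast
  qed
qed

lemma core:
  assumes xV: "x \<in> V" and yV: "y \<in> V" and xA: "x \<notin> A" and yA: "y \<notin> A" and xy: "x \<noteq> y"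
    and a1: "a1 \<in> A" and a2: "a2 \<in> A" and a12: "a1 \<noteq> a2" and r: "r \<in> A" "r \<noteq> a1" "r \<noteq> a2"
    and H1: "\<forall>u v. (u, v) \<in> E \<longrightarrow> u \<in> A \<longrightarrow> v \<in> A \<or> (u = a1 \<and> v = y) \<or> (u = a2 \<and> v = x)"
    and H2: "\<forall>u v. (u, v) \<in> E \<longrightarrow> v \<in> A \<longrightarrow> u \<in> A \<or> (u = x \<and> v = a1) \<or> (u = y \<and> v = a2)"
  shows False
proof -
  have "\<exists>a\<in>A. \<sigma> a \<notin> A"
  proof (rule ccontr)
    assume "\<not> ?thesis"
    then have "A = V" using scl[rule_format, of A] AV a1 by blast
    then show False using xV xA by blast
  qed
  then obtain a where a: "a \<in> A" "\<sigma> a \<notin> A" by blast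
  then have "(a = a1 \<and> \<sigma> a = y) \<or> (a = a2 \<and> \<sigma> a = x)" using H1 sE AV by blast
  then show False
  proof
    assume "a = a1 \<and> \<sigma> a = y"
    then show False
      using half[of y x a2 a1 r] assms by blast
  next
    assume "a = a2 \<and> \<sigma> a = x"
    then show False using half[of x y a1 a2 r] assms by blast
  qed
qed

end

lemma not_ham_crit:
  assumes AV: "A \<subseteq> V" and xV: "x \<in> V" and yV: "y \<in> V" and xA: "x \<notin> A" and yA: "y \<notin> A" and xy: "x \<noteq> y"
    and a1: "a1 \<in> A" and a2: "a2 \<in> A" and a12: "a1 \<noteq> a2" and r: "r \<in> A" "r \<noteq> a1" "r \<noteq> a2"
    and H1: "\<forall>u v. (u, v) \<in> E \<longrightarrow> u \<in> A \<longrightarrow> v \<in> A \<or> (u = a1 \<and> v = y) \<or> (u = a2 \<and> v = x)"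
    and H2: "\<forall>u v. (u, v) \<in> E \<longrightarrow> v \<in> A \<longrightarrow> u \<in> A \<or> (u = x \<and> v = a1) \<or> (u = y \<and> v = a2)"
  shows "\<not> hamiltonian V E"
proof
  assume h: "hamiltonian V E"
  obtain \<sigma> where P: "(\<forall>v\<in>V. \<sigma> v \<in> V) \<and> inj_on \<sigma> V \<and> (\<forall>v\<in>V. (v, \<sigma> v) \<in> E) \<and>
     (\<forall>S. S \<subseteq> V \<longrightarrow> S \<noteq> {} \<longrightarrow> (\<forall>s\<in>S. \<sigma> s \<in> S) \<longrightarrow> S = V)"
    using ham_sigma[OF h] by (elim exE) (erule that)
  have "hcore V E \<sigma> A" unfolding hcore_def using P AV by (elim conjE) (intro conjI; assumption)
  then interpret hcore V E \<sigma> A .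
  show False using core[OF xV yV xA yA xy a1 a2 a12 r H1 H2] .
qed



lemma rt_map:
  assumes "(a, b) \<in> r\<^sup>*" and "\<And>x y. (x, y) \<in> r \<Longrightarrow> (f x, f y) \<in> s"
  shows "(f a, f b) \<in> s\<^sup>*"
  using assms(1)
proof induction
  case base then show ?case by simp
next
  case (step y z) then show ?case using assms(2) by (meson rtrancl.rtrancl_into_rtrancl)
qed

definition dbl :: "nat \<Rightarrow> (nat \<times> nat) set \<Rightarrow> nat \<Rightarrow> nat \<Rightarrow> (nat \<times> nat) set" where
  "dbl m F s1 s2 = F \<union> (\<lambda>(u, v). (u + m, v + m)) ` F \<union>
     {(s1 + m, s1), (s1, s2 + m), (s2 + m, s2), (s2, s1 + m)}"

locale hgood =
  fixes m d :: nat and F :: "(nat \<times> nat) set" and s1 s2 :: nat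
  assumes Fsub: "F \<subseteq> {0..<m} \<times> {0..<m}"
    and loop: "\<forall>v. (v, v) \<notin> F"
    and s1: "s1 < m" and s2: "s2 < m" and s12: "s1 \<noteq> s2"
    and rex: "\<exists>r<m. r \<noteq> s1 \<and> r \<noteq> s2"
    and d1: "1 \<le> d"
    and outd: "\<forall>v<m. out_degree F v = (if v = s1 \<or> v = s2 then d - 1 else d)"
    and ind: "\<forall>v<m. in_degree F v = (if v = s1 \<or> v = s2 then d - 1 else d)"
    and sc: "strongly_connected {0..<m} F"
    and sc2: "\<forall>v<m. \<forall>u<m. u \<noteq> v \<longrightarrow>
       (\<exists>s\<in>{s1, s2}. s \<noteq> v \<and> (s, u) \<in> (F \<inter> (({0..<m} - {v}) \<times> ({0..<m} - {v})))\<^sup>*) \<and>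
       (\<exists>s\<in>{s1, s2}. s \<noteq> v \<and> (u, s) \<in> (F \<inter> (({0..<m} - {v}) \<times> ({0..<m} - {v})))\<^sup>*)"
begin

abbreviation "E \<equiv> dbl m F s1 s2"

lemma Fm: "(u, v) \<in> F \<Longrightarrow> u < m \<and> v < m" using Fsub by auto

lemma finF_out: "finite {w. (v, w) \<in> F}"
  by (rule finite_subset[of _ "{0..<m}"]) (auto dest: Fm)
lemma finF_in: "finite {w. (w, v) \<in> F}"
  by (rule finite_subset[of _ "{0..<m}"]) (auto dest: Fm)

lemma shift_mem: "(a, b) \<in> (\<lambda>(u, v). (u + m, v + m)) ` F \<longleftrightarrow> m \<le> a \<and> m \<le> b \<and> (a - m, b - m) \<in> F"
proof
  assume "(a, b) \<in> (\<lambda>(u, v). (u + m, v + m)) ` F"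
  then obtain u v where "(u, v) \<in> F" "a = u + m" "b = v + m" by auto
  then show "m \<le> a \<and> m \<le> b \<and> (a - m, b - m) \<in> F" by simp
next
  assume h: "m \<le> a \<and> m \<le> b \<and> (a - m, b - m) \<in> F"
  then have "(a, b) = (\<lambda>(u, v). (u + m, v + m)) (a - m, b - m)" by simp
  then show "(a, b) \<in> (\<lambda>(u, v). (u + m, v + m)) ` F" using h by blast
qed

lemma E_mem: "(a, b) \<in> E \<longleftrightarrow> (a, b) \<in> F \<or> (m \<le> a \<and> m \<le> b \<and> (a - m, b - m) \<in> F) \<or>
   (a = s1 + m \<and> b = s1) \<or> (a = s1 \<and> b = s2 + m) \<or> (a = s2 + m \<and> b = s2) \<or> (a = s2 \<and> b = s1 + m)"
  unfolding dbl_def using shift_mem by auto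

lemma out_lo: "v < m \<Longrightarrow> {w. (v, w) \<in> E} =
   {w. (v, w) \<in> F} \<union> {w. (v = s1 \<and> w = s2 + m) \<or> (v = s2 \<and> w = s1 + m)}"
  unfolding E_mem using s1 s2 by auto

lemma out_hi: "m \<le> v \<Longrightarrow> {w. (v, w) \<in> E} =
   {w. m \<le> w \<and> (v - m, w - m) \<in> F} \<union> {w. (v - m = s1 \<and> w = s1) \<or> (v - m = s2 \<and> w = s2)}"
  unfolding E_mem using s1 s2 by (auto dest: Fm)

lemma in_lo: "v < m \<Longrightarrow> {w. (w, v) \<in> E} =
   {w. (w, v) \<in> F} \<union> {w. (v = s1 \<and> w = s1 + m) \<or> (v = s2 \<and> w = s2 + m)}"
  unfolding E_mem using s1 s2 by auto

lemma in_hi: "m \<le> v \<Longrightarrow> {w. (w, v) \<in> E} =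
   {w. m \<le> w \<and> (w - m, v - m) \<in> F} \<union> {w. (v - m = s2 \<and> w = s1) \<or> (v - m = s1 \<and> w = s2)}"
  unfolding E_mem using s1 s2 by (auto dest: Fm)

lemma shift_set: "{w. m \<le> w \<and> P (w - m)} = (\<lambda>w. w + m) ` {w. P w}"
proof (rule set_eqI)
  fix x show "x \<in> {w. m \<le> w \<and> P (w - m)} \<longleftrightarrow> x \<in> (\<lambda>w. w + m) ` {w. P w}"
  proof
    assume "x \<in> {w. m \<le> w \<and> P (w - m)}"
    then have "x = (x - m) + m" "P (x - m)" by auto
    then show "x \<in> (\<lambda>w. w + m) ` {w. P w}" by blast
  qed auto
qed

lemma card_shift: "finite {w. P w} \<Longrightarrow> card {w. m \<le> w \<and> P (w - m)} = card {w. P w}"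
  unfolding shift_set by (rule card_image) (simp add: inj_on_def)

lemma out_E: assumes "v < 2 * m" shows "out_degree E v = d"
proof (cases "v < m")
  case True
  let ?A = "{w. (v, w) \<in> F}" and ?B = "{w. (v = s1 \<and> w = s2 + m) \<or> (v = s2 \<and> w = s1 + m)}"
  have dis: "?A \<inter> ?B = {}" by (auto dest: Fm)
  have cB: "card ?B = (if v = s1 \<or> v = s2 then 1 else 0)"
  proof -
    have "?B = (if v = s1 then {s2 + m} else if v = s2 then {s1 + m} else {})" using s12 by auto
    then show ?thesis by simp
  qed
  have "out_degree E v = card (?A \<union> ?B)" unfolding out_degree_def using out_lo[OF True] by simp
  also have "\<dots> = card ?A + card ?B" using dis finF_out by (intro card_Un_disjoint) auto
  finally show ?thesis using outd True cB d1 unfolding out_degree_def by auto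
next
  case False
  let ?A = "{w. m \<le> w \<and> (v - m, w - m) \<in> F}" and ?B = "{w. (v - m = s1 \<and> w = s1) \<or> (v - m = s2 \<and> w = s2)}"
  have dis: "?A \<inter> ?B = {}" using s1 s2 by auto
  have cB: "card ?B = (if v - m = s1 \<or> v - m = s2 then 1 else 0)"
  proof -
    have "?B = (if v - m = s1 then {s1} else if v - m = s2 then {s2} else {})" using s12 by auto
    then show ?thesis by simp
  qed
  have cA: "card ?A = out_degree F (v - m)" unfolding out_degree_def
    using card_shift[of "\<lambda>w. (v - m, w) \<in> F"] finF_out by simp
  have finA: "finite ?A" unfolding shift_set[of "\<lambda>w. (v - m, w) \<in> F"] using finF_out by simp
  have "out_degree E v = card (?A \<union> ?B)" unfolding out_degree_def using out_hi False by simp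
  also have "\<dots> = card ?A + card ?B" using dis finA by (intro card_Un_disjoint) auto
  finally show ?thesis using outd assms False cB cA d1 by auto
qed

lemma in_E: assumes "v < 2 * m" shows "in_degree E v = d"
proof (cases "v < m")
  case True
  let ?A = "{w. (w, v) \<in> F}" and ?B = "{w. (v = s1 \<and> w = s1 + m) \<or> (v = s2 \<and> w = s2 + m)}"
  have dis: "?A \<inter> ?B = {}" by (auto dest: Fm)
  have cB: "card ?B = (if v = s1 \<or> v = s2 then 1 else 0)"
  proof -
    have "?B = (if v = s1 then {s1 + m} else if v = s2 then {s2 + m} else {})" using s12 by auto
    then show ?thesis by simp
  qed
  have "in_degree E v = card (?A \<union> ?B)" unfolding in_degree_def using in_lo[OF True] by simp
  also have "\<dots> = card ?A + card ?B" using dis finF_in by (intro card_Un_disjoint) auto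
  finally show ?thesis using ind True cB d1 unfolding in_degree_def by auto
next
  case False
  let ?A = "{w. m \<le> w \<and> (w - m, v - m) \<in> F}" and ?B = "{w. (v - m = s2 \<and> w = s1) \<or> (v - m = s1 \<and> w = s2)}"
  have dis: "?A \<inter> ?B = {}" using s1 s2 by auto
  have cB: "card ?B = (if v - m = s1 \<or> v - m = s2 then 1 else 0)"
  proof -
    have "?B = (if v - m = s1 then {s2} else if v - m = s2 then {s1} else {})" using s12 by auto
    then show ?thesis by simp
  qed
  have cA: "card ?A = in_degree F (v - m)" unfolding in_degree_def
    using card_shift[of "\<lambda>w. (w, v - m) \<in> F"] finF_in by simp
  have finA: "finite ?A" unfolding shift_set[of "\<lambda>w. (w, v - m) \<in> F"] using finF_in by simp
  have "in_degree E v = card (?A \<union> ?B)" unfolding in_degree_def using in_hi False by simp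
  also have "\<dots> = card ?A + card ?B" using dis finA by (intro card_Un_disjoint) auto
  finally show ?thesis using ind assms False cB cA d1 by auto
qed

lemma G_regular: "regular d {0..<2 * m} E"
  unfolding regular_def using out_E in_E by auto

lemma E_bound: "(a, b) \<in> E \<Longrightarrow> a < 2 * m \<and> b < 2 * m"
  unfolding E_mem using s1 s2 Fm by fastforce

lemma G_digraph: "digraph {0..<2 * m} E"
proof -
  have "E \<subseteq> {0..<2 * m} \<times> {0..<2 * m}" using E_bound by auto
  moreover have "(v, v) \<notin> E" for v unfolding E_mem using loop s1 s2 by auto
  ultimately show ?thesis unfolding digraph_def by auto
qed

lemma G_oriented: assumes "\<forall>u v. (u, v) \<in> F \<longrightarrow> (v, u) \<notin> F"
  shows "oriented_graph {0..<2 * m} E"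
  unfolding oriented_graph_def using G_digraph assms s1 s2 s12 by (auto simp: E_mem dest: Fm)

lemma G_nonham: "\<not> hamiltonian {0..<2 * m} E"
proof -
  obtain r where r: "r < m" "r \<noteq> s1" "r \<noteq> s2" using rex by blast
  show ?thesis
  proof (rule not_ham_crit[of "{0..<m}" "{0..<2 * m}" "s1 + m" "s2 + m" s1 s2 r])
    show "\<forall>u v. (u, v) \<in> E \<longrightarrow> u \<in> {0..<m} \<longrightarrow>
      v \<in> {0..<m} \<or> u = s1 \<and> v = s2 + m \<or> u = s2 \<and> v = s1 + m"
      using s1 s2 by (auto simp: E_mem dest: Fm)
    show "\<forall>u v. (u, v) \<in> E \<longrightarrow> v \<in> {0..<m} \<longrightarrow>
      u \<in> {0..<m} \<or> u = s1 + m \<and> v = s1 \<or> u = s2 + m \<and> v = s2"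
      using s1 s2 by (auto simp: E_mem dest: Fm)
  qed (use s1 s2 s12 r in auto)
qed

lemma liftA: "Y \<subseteq> X \<Longrightarrow> (a, b) \<in> (F \<inter> Y \<times> Y)\<^sup>* \<Longrightarrow> (a, b) \<in> (E \<inter> X \<times> X)\<^sup>*"
proof -
  assume "Y \<subseteq> X" "(a, b) \<in> (F \<inter> Y \<times> Y)\<^sup>*"
  moreover have "F \<inter> Y \<times> Y \<subseteq> E \<inter> X \<times> X" using \<open>Y \<subseteq> X\<close> unfolding dbl_def by auto
  ultimately show ?thesis using rtrancl_mono by blast
qed

lemma liftB: "(\<lambda>w. w + m) ` Y \<subseteq> X \<Longrightarrow> (a, b) \<in> (F \<inter> Y \<times> Y)\<^sup>* \<Longrightarrow> (a + m, b + m) \<in> (E \<inter> X \<times> X)\<^sup>*"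
proof -
  assume Y: "(\<lambda>w. w + m) ` Y \<subseteq> X" and ab: "(a, b) \<in> (F \<inter> Y \<times> Y)\<^sup>*"
  show ?thesis
  proof (rule rt_map[OF ab])
    fix x y assume "(x, y) \<in> F \<inter> Y \<times> Y"
    then show "(x + m, y + m) \<in> E \<inter> X \<times> X" using Y by (auto simp: E_mem)
  qed
qed

lemma G_reach:
  fixes z :: nat
  defines "X \<equiv> {0..<2 * m} - {z}"
  shows "\<forall>u\<in>X. \<forall>w\<in>X. (u, w) \<in> (E \<inter> X \<times> X)\<^sup>*"
proof -
  let ?R = "E \<inter> X \<times> X"
  let ?W = "{0..<m}"
  have scW: "(a, b) \<in> (F \<inter> ?W \<times> ?W)\<^sup>*" if "a < m" "b < m" for a b
    using sc that unfolding strongly_connected_def by auto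
  have ed: "(p, q) \<in> ?R\<^sup>*" if "(p, q) \<in> E" "p \<in> X" "q \<in> X" for p q
    using that by auto
  have tr: "(a, c) \<in> ?R\<^sup>*" if "(a, b) \<in> ?R\<^sup>*" "(b, c) \<in> ?R\<^sup>*" for a b c
    using that by (rule rtrancl_trans)
  have RA: "(\<exists>s\<in>{s1, s2}. s \<noteq> z \<and> (s, u) \<in> ?R\<^sup>*) \<and> (\<exists>s\<in>{s1, s2}. s \<noteq> z \<and> (u, s) \<in> ?R\<^sup>*)"
    if u: "u < m" "u \<noteq> z" for u
  proof (cases "z < m")
    case True
    have sub: "{0..<m} - {z} \<subseteq> X" unfolding X_def by auto
    show ?thesis using sc2[rule_format, OF True u(1)] u(2) liftA[OF sub] by meson
  next
    case False
    have sub: "?W \<subseteq> X" unfolding X_def using False by auto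
    have "(s1, u) \<in> ?R\<^sup>*" "(u, s1) \<in> ?R\<^sup>*" using liftA[OF sub] scW s1 u by auto
    then show ?thesis using False s1 by auto
  qed
  have RB: "(\<exists>s\<in>{s1, s2}. s + m \<noteq> z \<and> (s + m, u + m) \<in> ?R\<^sup>*) \<and>
            (\<exists>s\<in>{s1, s2}. s + m \<noteq> z \<and> (u + m, s + m) \<in> ?R\<^sup>*)"
    if u: "u < m" "u + m \<noteq> z" for u
  proof (cases "m \<le> z \<and> z < 2 * m")
    case True
    then have zm: "z - m < m" "u \<noteq> z - m" using u by auto
    have sub: "(\<lambda>w. w + m) ` ({0..<m} - {z - m}) \<subseteq> X" unfolding X_def using True by auto
    have *: "s + m \<noteq> z" if "s \<noteq> z - m" for s using that True by auto
    show ?thesis using sc2[rule_format, OF zm(1) u(1) zm(2)] liftB[OF sub] * by meson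
  next
    case False
    have sub: "(\<lambda>w. w + m) ` ?W \<subseteq> X" unfolding X_def using False by auto
    have "(s1 + m, u + m) \<in> ?R\<^sup>*" "(u + m, s1 + m) \<in> ?R\<^sup>*" using liftB[OF sub] scW s1 u by auto
    moreover have "s1 + m \<noteq> z" using False s1 by auto
    ultimately show ?thesis by auto
  qed
  show ?thesis
  proof (cases "z < m")
    case True
    define h where "h = s1 + m"
    have subB: "(\<lambda>w. w + m) ` ?W \<subseteq> X" unfolding X_def using True by auto
    have Bc: "(a + m, b + m) \<in> ?R\<^sup>*" if "a < m" "b < m" for a b
      using liftB[OF subB] scW that by auto
    have hX: "s1 + m \<in> X" "s2 + m \<in> X" unfolding X_def using True s1 s2 by auto
    have port: "(s, h) \<in> ?R\<^sup>* \<and> (h, s) \<in> ?R\<^sup>*" if "s \<in> {s1, s2}" "s \<noteq> z" for s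
    proof -
      have sX: "s \<in> X" unfolding X_def using that s1 s2 by auto
      show ?thesis
      proof (cases "s = s1")
        case True
        have "(s, s2 + m) \<in> ?R\<^sup>*" using ed[of s "s2 + m"] sX hX True unfolding E_mem by auto
        moreover have "(s2 + m, h) \<in> ?R\<^sup>*" using Bc[of s2 s1] s1 s2 h_def by auto
        moreover have "(h, s) \<in> ?R\<^sup>*" using ed[of h s] sX hX True h_def unfolding E_mem by auto
        ultimately show ?thesis by (meson rtrancl_trans)
      next
        case False
        then have ss: "s = s2" using that by auto
        have "(s, h) \<in> ?R\<^sup>*" using ed[of s h] sX hX ss h_def unfolding E_mem by auto
        moreover have "(h, s2 + m) \<in> ?R\<^sup>*" using Bc[of s1 s2] s1 s2 h_def by auto
        moreover have "(s2 + m, s) \<in> ?R\<^sup>*" using ed[of "s2 + m" s] sX hX ss unfolding E_mem by auto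
        ultimately show ?thesis by (meson rtrancl_trans)
      qed
    qed
    have hub: "(u, h) \<in> ?R\<^sup>* \<and> (h, u) \<in> ?R\<^sup>*" if "u \<in> X" for u
    proof (cases "u < m")
      case True
      have "u \<noteq> z" using that X_def by auto
      then obtain s s' where "s \<in> {s1, s2}" "s \<noteq> z" "(s, u) \<in> ?R\<^sup>*"
        "s' \<in> {s1, s2}" "s' \<noteq> z" "(u, s') \<in> ?R\<^sup>*" using RA[OF True] by blast
      then show ?thesis using port by (meson rtrancl_trans)
    next
      case False
      then have "u - m < m" "u = (u - m) + m" using that X_def by auto
      then show ?thesis using Bc[of "u - m" s1] Bc[of s1 "u - m"] s1 h_def by auto
    qed
    show ?thesis using hub by (meson rtrancl_trans)
  next
    case False
    define h where "h = s1"
    have subA: "?W \<subseteq> X" unfolding X_def using False by auto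
    have Ac: "(a, b) \<in> ?R\<^sup>*" if "a < m" "b < m" for a b
      using liftA[OF subA] scW that by auto
    have hX: "s1 \<in> X" "s2 \<in> X" unfolding X_def using False s1 s2 by auto
    have port: "(s + m, h) \<in> ?R\<^sup>* \<and> (h, s + m) \<in> ?R\<^sup>*" if "s \<in> {s1, s2}" "s + m \<noteq> z" for s
    proof -
      have sX: "s + m \<in> X" unfolding X_def using that s1 s2 by auto
      show ?thesis
      proof (cases "s = s1")
        case True
        have "(s + m, h) \<in> ?R\<^sup>*" using ed[of "s + m" h] sX hX True h_def unfolding E_mem by auto
        moreover have "(h, s2) \<in> ?R\<^sup>*" using Ac[of s1 s2] s1 s2 h_def by auto
        moreover have "(s2, s + m) \<in> ?R\<^sup>*" using ed[of s2 "s + m"] sX hX True unfolding E_mem by auto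
        ultimately show ?thesis by (meson rtrancl_trans)
      next
        case False
        then have ss: "s = s2" using that by auto
        have "(s + m, s2) \<in> ?R\<^sup>*" using ed[of "s + m" s2] sX hX ss unfolding E_mem by auto
        moreover have "(s2, h) \<in> ?R\<^sup>*" using Ac[of s2 s1] s1 s2 h_def by auto
        moreover have "(h, s + m) \<in> ?R\<^sup>*" using ed[of h "s + m"] sX hX ss h_def unfolding E_mem by auto
        ultimately show ?thesis by (meson rtrancl_trans)
      qed
    qed
    have hub: "(u, h) \<in> ?R\<^sup>* \<and> (h, u) \<in> ?R\<^sup>*" if "u \<in> X" for u
    proof (cases "u < m")
      case True
      then show ?thesis using Ac[of u s1] Ac[of s1 u] s1 h_def by auto
    next
      case False
      then have um: "u - m < m" "u = (u - m) + m" "(u - m) + m \<noteq> z" using that X_def by auto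
      then obtain s s' where "s \<in> {s1, s2}" "s + m \<noteq> z" "(s + m, (u - m) + m) \<in> ?R\<^sup>*"
        "s' \<in> {s1, s2}" "s' + m \<noteq> z" "((u - m) + m, s' + m) \<in> ?R\<^sup>*" using RB[OF um(1) um(3)] by blast
      then show ?thesis using port um(2) by (metis rtrancl_trans)
    qed
    show ?thesis using hub by (meson rtrancl_trans)
  qed
qed

lemma G_s2c: "strongly_2_connected {0..<2 * m} E"
proof -
  have m2: "2 \<le> m" using s1 s2 s12 by auto
  have "strongly_connected {0..<2 * m} E"
    using G_reach[of "2 * m"] unfolding strongly_connected_def by simp
  moreover have "strongly_connected ({0..<2 * m} - {x}) (E \<inter> (({0..<2 * m} - {x}) \<times> ({0..<2 * m} - {x})))" for x
    using G_reach[of x] unfolding strongly_connected_def by (simp add: Int_assoc)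
  ultimately show ?thesis unfolding strongly_2_connected_def using m2 by auto
qed

end



definition Fd :: "nat \<Rightarrow> (nat \<times> nat) set" where
  "Fd n = {(i, j). i < n \<and> j < n \<and> i \<noteq> j \<and> \<not> (i < 2 \<and> j < 2)}"

lemma Fd_mem: "(a, b) \<in> Fd n \<longleftrightarrow> a < n \<and> b < n \<and> a \<noteq> b \<and> \<not> (a < 2 \<and> b < 2)"
  unfolding Fd_def by simp

lemma hgood_Fd: assumes n: "3 \<le> n" shows "hgood n (n - 1) (Fd n) 0 1"
proof
  show "Fd n \<subseteq> {0..<n} \<times> {0..<n}" unfolding Fd_def by auto
  show "\<forall>v. (v, v) \<notin> Fd n" unfolding Fd_def by auto
  show "0 < n" "1 < n" "(0::nat) \<noteq> 1" "1 \<le> n - 1" using n by auto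
  show "\<exists>r<n. r \<noteq> 0 \<and> r \<noteq> 1" using n by (intro exI[of _ 2]) auto
  show "\<forall>v<n. out_degree (Fd n) v = (if v = 0 \<or> v = 1 then n - 1 - 1 else n - 1)"
  proof (intro allI impI)
    fix v assume v: "v < n"
    show "out_degree (Fd n) v = (if v = 0 \<or> v = 1 then n - 1 - 1 else n - 1)"
    proof (cases "v < 2")
      case True
      then have "{w. (v, w) \<in> Fd n} = {2..<n}" unfolding Fd_def using v by auto
      then show ?thesis unfolding out_degree_def using True by auto
    next
      case False
      then have "{w. (v, w) \<in> Fd n} = {0..<n} - {v}" unfolding Fd_def using v by auto
      then show ?thesis unfolding out_degree_def using False v by auto
    qed
  qed
  show "\<forall>v<n. in_degree (Fd n) v = (if v = 0 \<or> v = 1 then n - 1 - 1 else n - 1)"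
  proof (intro allI impI)
    fix v assume v: "v < n"
    show "in_degree (Fd n) v = (if v = 0 \<or> v = 1 then n - 1 - 1 else n - 1)"
    proof (cases "v < 2")
      case True
      then have "{w. (w, v) \<in> Fd n} = {2..<n}" unfolding Fd_def using v by auto
      then show ?thesis unfolding in_degree_def using True by auto
    next
      case False
      then have "{w. (w, v) \<in> Fd n} = {0..<n} - {v}" unfolding Fd_def using v by auto
      then show ?thesis unfolding in_degree_def using False v by auto
    qed
  qed
  have reach: "(a, b) \<in> (Fd n \<inter> (({0..<n} - {v}) \<times> ({0..<n} - {v})))\<^sup>*"
    if ab: "a < n" "b < n" "a \<noteq> v" "b \<noteq> v" "v \<noteq> 2" for a b v
  proof -
    let ?R = "Fd n \<inter> (({0..<n} - {v}) \<times> ({0..<n} - {v}))"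
    show ?thesis
    proof (cases "a = b")
      case True then show ?thesis by simp
    next
      case False
      show ?thesis
      proof (cases "a < 2 \<and> b < 2")
        case True
        have "(a, 2) \<in> ?R" "(2, b) \<in> ?R" using True ab n False unfolding Fd_def by auto
        then show ?thesis by (meson rtrancl.simps rtrancl_trans r_into_rtrancl)
      next
        case nb: False
        then have "(a, b) \<in> ?R" using ab False unfolding Fd_def by auto
        then show ?thesis by auto
      qed
    qed
  qed
  show "strongly_connected {0..<n} (Fd n)"
    unfolding strongly_connected_def
  proof (intro ballI)
    fix a b assume "a \<in> {0..<n}" "b \<in> {0..<n}"
    then have "(a, b) \<in> (Fd n \<inter> (({0..<n} - {n}) \<times> ({0..<n} - {n})))\<^sup>*" using reach[of a b n] n by auto
    then show "(a, b) \<in> (Fd n \<inter> {0..<n} \<times> {0..<n})\<^sup>*" by simp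
  qed
  show "\<forall>v<n. \<forall>u<n. u \<noteq> v \<longrightarrow>
       (\<exists>s\<in>{0, 1}. s \<noteq> v \<and> (s, u) \<in> (Fd n \<inter> (({0..<n} - {v}) \<times> ({0..<n} - {v})))\<^sup>*) \<and>
       (\<exists>s\<in>{0, 1}. s \<noteq> v \<and> (u, s) \<in> (Fd n \<inter> (({0..<n} - {v}) \<times> ({0..<n} - {v})))\<^sup>*)"
  proof (intro allI impI)
    fix v u :: nat assume v: "v < n" and u: "u < n" and uv: "u \<noteq> v"
    let ?R = "Fd n \<inter> (({0..<n} - {v}) \<times> ({0..<n} - {v}))"
    show "(\<exists>s\<in>{0, 1}. s \<noteq> v \<and> (s, u) \<in> ?R\<^sup>*) \<and> (\<exists>s\<in>{0, 1}. s \<noteq> v \<and> (u, s) \<in> ?R\<^sup>*)"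
    proof (cases "u < 2")
      case True
      then have "u \<in> {0, 1}" by auto
      then show ?thesis using uv by blast
    next
      case False
      obtain s :: nat where s: "s \<in> {0, 1}" "s \<noteq> v" by (cases "v = 0") auto
      have "(s, u) \<in> ?R" "(u, s) \<in> ?R" using s False u uv n unfolding Fd_def by auto
      then show ?thesis using s by blast
    qed
  qed
qed

lemma digraph_part:
  assumes n: "3 \<le> n"
  shows "\<exists>(V :: nat set) E. digraph V E \<and> card V = 2 * n \<and> regular (n - 1) V E \<and>
             strongly_2_connected V E \<and> \<not> hamiltonian V E"
proof -
  interpret hgood n "n - 1" "Fd n" 0 1 using hgood_Fd[OF n] .
  show ?thesis using G_digraph G_regular G_s2c G_nonham by (intro exI[of _ "{0..<2 * n}"]) auto
qed



definition tE :: "nat \<Rightarrow> nat \<Rightarrow> nat \<Rightarrow> bool" where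
  "tE d i j \<longleftrightarrow> i < 2 * d + 1 \<and> j < 2 * d + 1 \<and> ((i < j \<and> j \<le> i + d) \<or> j + d < i)"

definition remE :: "nat \<Rightarrow> nat \<Rightarrow> nat \<Rightarrow> bool" where
  "remE d i j \<longleftrightarrow> (i + 1 < d \<and> j = i + d) \<or> (d < i \<and> i < 2 * d \<and> j + d + 1 = i)"

definition Fo :: "nat \<Rightarrow> (nat \<times> nat) set" where
  "Fo d = {(i, j). (tE d i j \<and> \<not> remE d i j) \<or> (j = 2 * d + 1 \<and> i + 1 < d) \<or>
     (i = 2 * d + 1 \<and> d \<le> j \<and> j + 1 < 2 * d) \<or> (j = 2 * d + 2 \<and> d < i \<and> i < 2 * d) \<or>
     (i = 2 * d + 2 \<and> j + 1 < d)}"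

lemma Fo_mem: "(a, b) \<in> Fo d \<longleftrightarrow> (tE d a b \<and> \<not> remE d a b) \<or> (b = 2 * d + 1 \<and> a + 1 < d) \<or>
     (a = 2 * d + 1 \<and> d \<le> b \<and> b + 1 < 2 * d) \<or> (b = 2 * d + 2 \<and> d < a \<and> a < 2 * d) \<or>
     (a = 2 * d + 2 \<and> b + 1 < d)"
  unfolding Fo_def by simp

lemma chain:
  assumes "\<forall>k. a \<le> k \<and> k < b \<longrightarrow> (k, Suc k) \<in> R" "a \<le> b"
  shows "(a, b) \<in> R\<^sup>*"
  using assms
proof (induction b)
  case 0 then show ?case by simp
next
  case (Suc b)
  show ?case
  proof (cases "a \<le> b")
    case True
    then have "(a, b) \<in> R\<^sup>*" using Suc by auto
    moreover have "(b, Suc b) \<in> R" using Suc True by auto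
    ultimately show ?thesis by (rule rtrancl_into_rtrancl)
  next
    case False
    then have "a = Suc b" using Suc by auto
    then show ?thesis by simp
  qed
qed

locale oc =
  fixes d :: nat
  assumes d2: "2 \<le> d"
begin

abbreviation "F \<equiv> Fo d"
abbreviation "Y v \<equiv> {0..<2 * d + 3} - {v}"
abbreviation "RY v \<equiv> F \<inter> (Y v \<times> Y v)"

lemma C1: "i + 1 < 2 * d + 1 \<Longrightarrow> (i, i + 1) \<in> F"
  unfolding Fo_mem tE_def remE_def using d2 by auto

lemma C1w: "(2 * d, 0) \<in> F"
  unfolding Fo_mem tE_def remE_def using d2 by auto

lemma D2: "tE d i j \<Longrightarrow> (i, j) \<in> F \<or> ((i, 2 * d + 1) \<in> F \<and> (2 * d + 1, j) \<in> F) \<or>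
    ((i, 2 * d + 2) \<in> F \<and> (2 * d + 2, j) \<in> F)"
  unfolding Fo_mem remE_def tE_def by auto

lemma fwd: "a \<le> b \<Longrightarrow> b < 2 * d + 1 \<Longrightarrow> \<not> (a \<le> v \<and> v \<le> b) \<Longrightarrow> (a, b) \<in> (RY v)\<^sup>*"
  by (rule chain) (use C1 in auto)

lemma ed: "(a, b) \<in> F \<Longrightarrow> a \<noteq> v \<Longrightarrow> b \<noteq> v \<Longrightarrow> a < 2 * d + 3 \<Longrightarrow> b < 2 * d + 3 \<Longrightarrow> (a, b) \<in> (RY v)\<^sup>*"
  by auto

lemma backT: "tE d i j \<Longrightarrow> i \<noteq> v \<Longrightarrow> j \<noteq> v \<Longrightarrow> v < 2 * d + 1 \<Longrightarrow> (i, j) \<in> (RY v)\<^sup>*"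
proof -
  assume t: "tE d i j" and iv: "i \<noteq> v" and jv: "j \<noteq> v" and v: "v < 2 * d + 1"
  have ij: "i < 2 * d + 1" "j < 2 * d + 1" using t unfolding tE_def by auto
  from D2[OF t] show ?thesis
  proof (elim disjE conjE)
    assume "(i, j) \<in> F" then show ?thesis using ed iv jv ij by auto
  next
    assume "(i, 2 * d + 1) \<in> F" "(2 * d + 1, j) \<in> F"
    then have "(i, 2 * d + 1) \<in> RY v" "(2 * d + 1, j) \<in> RY v" using iv jv ij v by auto
    then show ?thesis by (meson converse_rtrancl_into_rtrancl r_into_rtrancl)
  next
    assume "(i, 2 * d + 2) \<in> F" "(2 * d + 2, j) \<in> F"
    then have "(i, 2 * d + 2) \<in> RY v" "(2 * d + 2, j) \<in> RY v" using iv jv ij v by auto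
    then show ?thesis by (meson converse_rtrancl_into_rtrancl r_into_rtrancl)
  qed
qed

lemma Tconn: "a < 2 * d + 1 \<Longrightarrow> c < 2 * d + 1 \<Longrightarrow> a \<noteq> v \<Longrightarrow> c \<noteq> v \<Longrightarrow> (a, c) \<in> (RY v)\<^sup>*"
proof -
  assume a: "a < 2 * d + 1" and c: "c < 2 * d + 1" and av: "a \<noteq> v" and cv: "c \<noteq> v"
  show ?thesis
  proof (cases "v < 2 * d + 1")
    case False
    show ?thesis
    proof (cases "a \<le> c")
      case True then show ?thesis using fwd[of a c v] False c by auto
    next
      case ac: False
      have "(a, 2 * d) \<in> (RY v)\<^sup>*" using fwd[of a "2 * d" v] False a by auto
      moreover have "(2 * d, 0) \<in> (RY v)\<^sup>*" using ed[OF C1w] False by auto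
      moreover have "(0, c) \<in> (RY v)\<^sup>*" using fwd[of 0 c v] False c by auto
      ultimately show ?thesis by (meson rtrancl_trans)
    qed
  next
    case vq: True
    define e where "e = (if v = 0 then 2 * d else v - 1)"
    define b where "b = (if v = 2 * d then 0 else v + 1)"
    have eb: "(e, b) \<in> (RY v)\<^sup>*"
      by (rule backT) (use vq d2 in \<open>auto simp: e_def b_def tE_def\<close>)
    have ae: "(a, e) \<in> (RY v)\<^sup>*"
    proof (cases "a < v")
      case True
      then show ?thesis using fwd[of a "v - 1" v] e_def vq by auto
    next
      case False
      then have av': "v < a" using av by auto
      have "(a, 2 * d) \<in> (RY v)\<^sup>*" using fwd[of a "2 * d" v] av' a by auto
      show ?thesis
      proof (cases "v = 0")
        case True then show ?thesis using \<open>(a, 2 * d) \<in> (RY v)\<^sup>*\<close> e_def by simp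
      next
        case v0: False
        have "(2 * d, 0) \<in> (RY v)\<^sup>*" using ed[OF C1w] v0 av' a by auto
        moreover have "(0, v - 1) \<in> (RY v)\<^sup>*" using fwd[of 0 "v - 1" v] v0 vq by auto
        moreover have "e = v - 1" using e_def v0 by simp
        ultimately show ?thesis using \<open>(a, 2 * d) \<in> (RY v)\<^sup>*\<close> by (meson rtrancl_trans)
      qed
    qed
    have bc: "(b, c) \<in> (RY v)\<^sup>*"
    proof (cases "v < c")
      case True
      then show ?thesis using fwd[of "v + 1" c v] b_def c vq by auto
    next
      case False
      then have cv': "c < v" using cv by auto
      have "(0, c) \<in> (RY v)\<^sup>*" using fwd[of 0 c v] cv' c by auto
      show ?thesis
      proof (cases "v = 2 * d")
        case True then show ?thesis using \<open>(0, c) \<in> (RY v)\<^sup>*\<close> b_def by simp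
      next
        case v2: False
        have "(v + 1, 2 * d) \<in> (RY v)\<^sup>*" using fwd[of "v + 1" "2 * d" v] v2 vq by auto
        moreover have "(2 * d, 0) \<in> (RY v)\<^sup>*" using ed[OF C1w] v2 cv' by auto
        moreover have "b = v + 1" using b_def v2 by simp
        ultimately show ?thesis using \<open>(0, c) \<in> (RY v)\<^sup>*\<close> by (meson rtrancl_trans)
      qed
    qed
    show ?thesis using ae eb bc by (meson rtrancl_trans)
  qed
qed

lemma Tout_card: assumes v: "v < 2 * d + 1" shows "card {j. tE d v j} = d"
proof (cases "v \<le> d")
  case True
  have "{j. tE d v j} = {v<..v + d}" using True v unfolding tE_def by auto
  then show ?thesis by simp
next
  case False
  have eq: "{j. tE d v j} = {v<..<2 * d + 1} \<union> {..<v - d}" using False v unfolding tE_def by auto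
  have "card ({v<..<2 * d + 1} \<union> {..<v - d}) = card {v<..<2 * d + 1} + card {..<v - d}"
    by (rule card_Un_disjoint) auto
  then show ?thesis using eq False v by simp
qed

lemma Tin_card: assumes v: "v < 2 * d + 1" shows "card {i. tE d i v} = d"
proof -
  have eq: "{i. tE d i v} = {v - d..<v} \<union> {v + d<..<2 * d + 1}" using v unfolding tE_def by auto
  have "card ({v - d..<v} \<union> {v + d<..<2 * d + 1}) = card {v - d..<v} + card {v + d<..<2 * d + 1}"
    by (rule card_Un_disjoint) auto
  then show ?thesis using eq v by simp
qed

lemma card_swap: "finite S \<Longrightarrow> a \<in> S \<Longrightarrow> b \<notin> S \<Longrightarrow> card (insert b (S - {a})) = card S"
proof -
  assume "finite S" "a \<in> S" "b \<notin> S"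
  then have "card (insert b (S - {a})) = Suc (card (S - {a}))" by (simp add: card_insert_disjoint)
  also have "\<dots> = card S" using \<open>finite S\<close> \<open>a \<in> S\<close> card_Diff_singleton card_gt_0_iff
    by (metis One_nat_def Suc_pred empty_iff)
  finally show ?thesis .
qed

lemma finT_out: "finite {j. tE d v j}"
  by (rule finite_subset[of _ "{0..<2 * d + 1}"]) (auto simp: tE_def)
lemma finT_in: "finite {j. tE d j v}"
  by (rule finite_subset[of _ "{0..<2 * d + 1}"]) (auto simp: tE_def)

lemma out_F: assumes v: "v < 2 * d + 3"
  shows "out_degree F v = (if v = 2 * d + 1 \<or> v = 2 * d + 2 then d - 1 else d)"
proof -
  consider (s1) "v = 2 * d + 1" | (s2) "v = 2 * d + 2" | (a) "v < 2 * d + 1" "v + 1 < d"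
    | (b) "v < 2 * d + 1" "d < v" "v < 2 * d" | (c) "v < 2 * d + 1" "\<not> v + 1 < d" "\<not> (d < v \<and> v < 2 * d)"
    using v by linarith
  then show ?thesis
  proof cases
    case s1
    have "{w. (v, w) \<in> F} = {d..<2 * d - 1}" using s1 unfolding Fo_mem tE_def by auto
    then show ?thesis unfolding out_degree_def using s1 by simp
  next
    case s2
    have "{w. (v, w) \<in> F} = {..<d - 1}" using s2 unfolding Fo_mem tE_def by auto
    then show ?thesis unfolding out_degree_def using s2 by simp
  next
    case a
    have "{w. (v, w) \<in> F} = insert (2 * d + 1) ({j. tE d v j} - {v + d})"
      using a unfolding Fo_mem tE_def remE_def by auto
    moreover have "card (insert (2 * d + 1) ({j. tE d v j} - {v + d})) = card {j. tE d v j}"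
      by (rule card_swap) (use a finT_out in \<open>auto simp: tE_def\<close>)
    ultimately show ?thesis unfolding out_degree_def using a Tout_card by simp
  next
    case b
    have "{w. (v, w) \<in> F} = insert (2 * d + 2) ({j. tE d v j} - {v - d - 1})"
      using b unfolding Fo_mem tE_def remE_def by auto
    moreover have "card (insert (2 * d + 2) ({j. tE d v j} - {v - d - 1})) = card {j. tE d v j}"
      by (rule card_swap) (use b finT_out in \<open>auto simp: tE_def\<close>)
    ultimately show ?thesis unfolding out_degree_def using b Tout_card by simp
  next
    case c
    have "{w. (v, w) \<in> F} = {j. tE d v j}"
      using c unfolding Fo_mem tE_def remE_def by auto
    then show ?thesis unfolding out_degree_def using c Tout_card by simp
  qed
qed

lemma in_F: assumes v: "v < 2 * d + 3"
  shows "in_degree F v = (if v = 2 * d + 1 \<or> v = 2 * d + 2 then d - 1 else d)"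
proof -
  consider (s1) "v = 2 * d + 1" | (s2) "v = 2 * d + 2" | (a) "v < 2 * d + 1" "d \<le> v" "v + 1 < 2 * d"
    | (b) "v < 2 * d + 1" "v + 1 < d" | (c) "v < 2 * d + 1" "\<not> (d \<le> v \<and> v + 1 < 2 * d)" "\<not> v + 1 < d"
    using v by linarith
  then show ?thesis
  proof cases
    case s1
    have "{w. (w, v) \<in> F} = {..<d - 1}" using s1 unfolding Fo_mem tE_def by auto
    then show ?thesis unfolding in_degree_def using s1 by simp
  next
    case s2
    have "{w. (w, v) \<in> F} = {d<..<2 * d}" using s2 unfolding Fo_mem tE_def by auto
    then show ?thesis unfolding in_degree_def using s2 by simp
  next
    case a
    have "{w. (w, v) \<in> F} = insert (2 * d + 1) ({j. tE d j v} - {v - d})"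
      using a unfolding Fo_mem tE_def remE_def by auto
    moreover have "card (insert (2 * d + 1) ({j. tE d j v} - {v - d})) = card {j. tE d j v}"
      by (rule card_swap) (use a finT_in in \<open>auto simp: tE_def\<close>)
    ultimately show ?thesis unfolding in_degree_def using a Tin_card by simp
  next
    case b
    have "{w. (w, v) \<in> F} = insert (2 * d + 2) ({j. tE d j v} - {v + d + 1})"
      using b unfolding Fo_mem tE_def remE_def by auto
    moreover have "card (insert (2 * d + 2) ({j. tE d j v} - {v + d + 1})) = card {j. tE d j v}"
      by (rule card_swap) (use b finT_in in \<open>auto simp: tE_def\<close>)
    ultimately show ?thesis unfolding in_degree_def using b Tin_card by simp
  next
    case c
    have "{w. (w, v) \<in> F} = {j. tE d j v}"
      using c unfolding Fo_mem tE_def remE_def by auto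
    then show ?thesis unfolding in_degree_def using c Tin_card by simp
  qed
qed

lemma port_out: "\<exists>s t. (s = 2 * d + 1 \<or> s = 2 * d + 2) \<and> s \<noteq> v \<and> t < 2 * d + 1 \<and> t \<noteq> v \<and> (s, t) \<in> F"
proof (cases "v = d \<or> v = 2 * d + 1")
  case True
  then show ?thesis using d2 by (intro exI[of _ "2 * d + 2"] exI[of _ 0]) (auto simp: Fo_mem)
next
  case False
  then show ?thesis using d2 by (intro exI[of _ "2 * d + 1"] exI[of _ d]) (auto simp: Fo_mem)
qed

lemma port_in: "\<exists>s t. (s = 2 * d + 1 \<or> s = 2 * d + 2) \<and> s \<noteq> v \<and> t < 2 * d + 1 \<and> t \<noteq> v \<and> (t, s) \<in> F"
proof (cases "v = 0 \<or> v = 2 * d + 1")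
  case True
  then show ?thesis using d2 by (intro exI[of _ "2 * d + 2"] exI[of _ "2 * d - 1"]) (auto simp: Fo_mem)
next
  case False
  then show ?thesis using d2 by (intro exI[of _ "2 * d + 1"] exI[of _ 0]) (auto simp: Fo_mem)
qed

lemma reach_ports:
  assumes u: "u < 2 * d + 3" "u \<noteq> v"
  shows "(\<exists>s\<in>{2 * d + 1, 2 * d + 2}. s \<noteq> v \<and> (s, u) \<in> (RY v)\<^sup>*) \<and>
         (\<exists>s\<in>{2 * d + 1, 2 * d + 2}. s \<noteq> v \<and> (u, s) \<in> (RY v)\<^sup>*)"
proof (cases "u < 2 * d + 1")
  case False
  then have "u \<in> {2 * d + 1, 2 * d + 2}" using u by auto
  then show ?thesis using u by blast
next
  case True
  obtain s t where st: "s = 2 * d + 1 \<or> s = 2 * d + 2" "s \<noteq> v" "t < 2 * d + 1" "t \<noteq> v" "(s, t) \<in> F"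
    using port_out by blast
  obtain s' t' where st': "s' = 2 * d + 1 \<or> s' = 2 * d + 2" "s' \<noteq> v" "t' < 2 * d + 1" "t' \<noteq> v" "(t', s') \<in> F"
    using port_in by blast
  have "(s, t) \<in> (RY v)\<^sup>*" using ed[of s t v] st by auto
  moreover have "(t, u) \<in> (RY v)\<^sup>*" using Tconn[of t u v] st True u by auto
  moreover have "(u, t') \<in> (RY v)\<^sup>*" using Tconn[of u t' v] st' True u by auto
  moreover have "(t', s') \<in> (RY v)\<^sup>*" using ed[of t' s' v] st' by auto
  ultimately show ?thesis using st st' by (meson insertCI rtrancl_trans)
qed

lemma ports_conn: "(2 * d + 1, 2 * d + 2) \<in> (RY v)\<^sup>*" "(2 * d + 2, 2 * d + 1) \<in> (RY v)\<^sup>*"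
  if "2 * d + 3 \<le> v"
proof -
  have "(2 * d + 1, d) \<in> (RY v)\<^sup>*" using ed[of "2 * d + 1" d v] that d2 by (auto simp: Fo_mem)
  moreover have "(d, 2 * d - 1) \<in> (RY v)\<^sup>*" using Tconn[of d "2 * d - 1" v] that d2 by auto
  moreover have "d < 2 * d - 1" using d2 by linarith
  then have "(2 * d - 1, 2 * d + 2) \<in> F" unfolding Fo_mem by simp
  then have "(2 * d - 1, 2 * d + 2) \<in> (RY v)\<^sup>*" using ed[of "2 * d - 1" "2 * d + 2" v] that d2 by simp
  ultimately show "(2 * d + 1, 2 * d + 2) \<in> (RY v)\<^sup>*" by (meson rtrancl_trans)
  have "(2 * d + 2, 0) \<in> (RY v)\<^sup>*" using ed[of "2 * d + 2" 0 v] that d2 by (auto simp: Fo_mem)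
  moreover have "(0, 2 * d + 1) \<in> (RY v)\<^sup>*" using ed[of 0 "2 * d + 1" v] that d2 by (auto simp: Fo_mem)
  ultimately show "(2 * d + 2, 2 * d + 1) \<in> (RY v)\<^sup>*" by (meson rtrancl_trans)
qed

lemma hgood_Fo: "hgood (2 * d + 3) d F (2 * d + 1) (2 * d + 2)"
proof
  show "F \<subseteq> {0..<2 * d + 3} \<times> {0..<2 * d + 3}" by (auto simp: Fo_mem tE_def)
  show "\<forall>v. (v, v) \<notin> F" by (auto simp: Fo_mem tE_def)
  show "2 * d + 1 < 2 * d + 3" "2 * d + 2 < 2 * d + 3" "2 * d + 1 \<noteq> 2 * d + 2" "1 \<le> d" using d2 by auto
  show "\<exists>r<2 * d + 3. r \<noteq> 2 * d + 1 \<and> r \<noteq> 2 * d + 2" by (intro exI[of _ 0]) auto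
  show "\<forall>v<2 * d + 3. out_degree F v = (if v = 2 * d + 1 \<or> v = 2 * d + 2 then d - 1 else d)"
    using out_F by blast
  show "\<forall>v<2 * d + 3. in_degree F v = (if v = 2 * d + 1 \<or> v = 2 * d + 2 then d - 1 else d)"
    using in_F by blast
  show "\<forall>v<2 * d + 3. \<forall>u<2 * d + 3. u \<noteq> v \<longrightarrow>
       (\<exists>s\<in>{2 * d + 1, 2 * d + 2}. s \<noteq> v \<and> (s, u) \<in> (RY v)\<^sup>*) \<and>
       (\<exists>s\<in>{2 * d + 1, 2 * d + 2}. s \<noteq> v \<and> (u, s) \<in> (RY v)\<^sup>*)"
    using reach_ports by blast
  show "strongly_connected {0..<2 * d + 3} F"
    unfolding strongly_connected_def
  proof (intro ballI)
    fix a b assume a: "a \<in> {0..<2 * d + 3}" and b: "b \<in> {0..<2 * d + 3}"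
    let ?v = "2 * d + 3"
    obtain s where s: "s \<in> {2 * d + 1, 2 * d + 2}" "(a, s) \<in> (RY ?v)\<^sup>*" using reach_ports[of a ?v] a by auto
    obtain s' where s': "s' \<in> {2 * d + 1, 2 * d + 2}" "(s', b) \<in> (RY ?v)\<^sup>*" using reach_ports[of b ?v] b by auto
    have "(s, s') \<in> (RY ?v)\<^sup>*" using s s' ports_conn[of ?v] by auto
    then have "(a, b) \<in> (RY ?v)\<^sup>*" using s s' by (meson rtrancl_trans)
    then show "(a, b) \<in> (F \<inter> {0..<2 * d + 3} \<times> {0..<2 * d + 3})\<^sup>*" by simp
  qed
qed

lemma Fo_anti: "\<forall>u v. (u, v) \<in> F \<longrightarrow> (v, u) \<notin> F"
  by (auto simp: Fo_mem tE_def remE_def)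

end

lemma oriented_part:
  assumes n: "3 \<le> n"
  shows "\<exists>(V :: nat set) E. oriented_graph V E \<and> card V = 4 * n + 2 \<and> regular (n - 1) V E \<and>
             strongly_2_connected V E \<and> \<not> hamiltonian V E"
proof -
  define d where "d = n - 1"
  have d2: "2 \<le> d" using n d_def by auto
  interpret oc d using d2 by unfold_locales
  interpret hgood "2 * d + 3" d "Fo d" "2 * d + 1" "2 * d + 2" using hgood_Fo .
  have c: "2 * (2 * d + 3) = 4 * n + 2" using d_def n by auto
  show ?thesis using G_oriented[OF Fo_anti] G_regular G_s2c G_nonham c d_def
    by (intro exI[of _ "{0..<2 * (2 * d + 3)}"]) auto
qed

theorem proposition1p6:
  fixes n :: nat
  assumes "n \<ge> 3"
  shows "(\<exists>(V :: nat set) E. digraph V E \<and> card V = 2 * n \<and> regular (n - 1) V E \<and>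
             strongly_2_connected V E \<and> \<not> hamiltonian V E)
       \<and> (\<exists>(V :: nat set) E. oriented_graph V E \<and> card V = 4 * n + 2 \<and> regular (n - 1) V E \<and>
             strongly_2_connected V E \<and> \<not> hamiltonian V E)"
  using digraph_part[OF assms] oriented_part[OF assms] by blast


end
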